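(* Let $G$ be a digraph and $i\le 0\le j$ integers. Each of the following properties holds for $G$ if and only if it holds for $G^{[i,j]}$: the Taylor property; the $\operatorname{SD}(\wedge)$ property; having a $2$-semilattice polymorphism; having totally symmetric idempotent polymorphisms of all arities.
   Context: Digraphs are finite and loopless. For $G=(V,E)$, $G^{[i,j]}$ is the digraph on $\{i,\dots,-1\}\cup V\cup\{1,\dots,j\}$ (disjoint union) whose edges are: $u\to w$ for integers $u<w$ in $\{i,\dots,-1,1,\dots,j\}$; the edges of $E$; $u\to v$ for every integer $u<0$ and $v\in V$; $v\to u$ for every $v\in V$ and integer $u>0$. A polymorphism of arity $k$ is a map $f:V^k\to V$ with $(f(a_1,\dots,a_k),f(b_1,\dots,b_k))\in E$ whenever all $(a_i,b_i)\in E$. Weak NU: idempotent polymorphism $w$ of arity $n>1$ with $w(y,x,\dots,x)=w(x,y,x,\dots,x)=\dots=w(x,\dots,x,y)$. Taylor: has a weak NU polymorphism. $\operatorname{SD}(\wedge)$: a $3$-ary weak NU $w_1$ and a $4$-ary weak NU $w_2$ with $w_1(y,x,x)=w_2(y,x,x,x)$. A $2$-semilattice polymorphism is a binary idempotent polymorphism $\cdot$ with $x\cdot y=y\cdot x$ and $x\cdot(x\cdot y)=x\cdot y$. A totally symmetric idempotent polymorphism of arity $n$ is an idempotent $n$-ary polymorphism $p$ with $p(x_1,\dots,x_n)=p(y_1,\dots,y_n)$ whenever $\{x_1,\dots,x_n\}=\{y_1,\dots,y_n\}$. *)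

theory Defs
  imports Main
begin

definition digraph :: "'a set \<Rightarrow> ('a \<times> 'a) set \<Rightarrow> bool" where
  "digraph V E \<longleftrightarrow> finite V \<and> E \<subseteq> V \<times> V \<and> (\<forall>v. (v, v) \<notin> E)"

definition int_part :: "int \<Rightarrow> int \<Rightarrow> int set" where
  "int_part i j = {i..-1} \<union> {1..j}"

text \<open>G^[i,j]: disjoint union realised on the sum type int + 'a.\<close>
definition ext_V :: "int \<Rightarrow> int \<Rightarrow> 'a set \<Rightarrow> (int + 'a) set" where
  "ext_V i j V = Inl ` int_part i j \<union> Inr ` V"

definition ext_E :: "int \<Rightarrow> int \<Rightarrow> 'a set \<Rightarrow> ('a \<times> 'a) set \<Rightarrow> ((int + 'a) \<times> (int + 'a)) set" where
  "ext_E i j V E =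
     {(Inl u, Inl w) | u w. u \<in> int_part i j \<and> w \<in> int_part i j \<and> u < w}
   \<union> {(Inr a, Inr b) | a b. (a, b) \<in> E}
   \<union> {(Inl u, Inr v) | u v. u \<in> int_part i j \<and> u < 0 \<and> v \<in> V}
   \<union> {(Inr v, Inl u) | v u. v \<in> V \<and> u \<in> int_part i j \<and> u > 0}"

text \<open>k-ary operations are functions on lists; only their values on lists of length k
  over V matter.\<close>
definition polymorphism :: "'a set \<Rightarrow> ('a \<times> 'a) set \<Rightarrow> nat \<Rightarrow> ('a list \<Rightarrow> 'a) \<Rightarrow> bool" where
  "polymorphism V E k f \<longleftrightarrow>
     (\<forall>xs. length xs = k \<and> set xs \<subseteq> V \<longrightarrow> f xs \<in> V) \<and>
     (\<forall>xs ys. length xs = k \<and> length ys = k \<and> set xs \<subseteq> V \<and> set ys \<subseteq> V \<and>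
        (\<forall>l<k. (xs ! l, ys ! l) \<in> E) \<longrightarrow> (f xs, f ys) \<in> E)"

definition idempotent_op :: "'a set \<Rightarrow> nat \<Rightarrow> ('a list \<Rightarrow> 'a) \<Rightarrow> bool" where
  "idempotent_op V k f \<longleftrightarrow> (\<forall>x\<in>V. f (replicate k x) = x)"

definition weak_nu :: "'a set \<Rightarrow> ('a \<times> 'a) set \<Rightarrow> nat \<Rightarrow> ('a list \<Rightarrow> 'a) \<Rightarrow> bool" where
  "weak_nu V E n w \<longleftrightarrow> n > 1 \<and> polymorphism V E n w \<and> idempotent_op V n w \<and>
     (\<forall>x\<in>V. \<forall>y\<in>V. \<forall>p<n. \<forall>q<n.
        w ((replicate n x)[p := y]) = w ((replicate n x)[q := y]))"

definition taylor :: "'a set \<Rightarrow> ('a \<times> 'a) set \<Rightarrow> bool" where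
  "taylor V E \<longleftrightarrow> (\<exists>n w. weak_nu V E n w)"

definition SD_meet :: "'a set \<Rightarrow> ('a \<times> 'a) set \<Rightarrow> bool" where
  "SD_meet V E \<longleftrightarrow> (\<exists>w1 w2. weak_nu V E 3 w1 \<and> weak_nu V E 4 w2 \<and>
     (\<forall>x\<in>V. \<forall>y\<in>V. w1 [y, x, x] = w2 [y, x, x, x]))"

definition two_semilattice_pol :: "'a set \<Rightarrow> ('a \<times> 'a) set \<Rightarrow> ('a list \<Rightarrow> 'a) \<Rightarrow> bool" where
  "two_semilattice_pol V E m \<longleftrightarrow> polymorphism V E 2 m \<and> idempotent_op V 2 m \<and>
     (\<forall>x\<in>V. \<forall>y\<in>V. m [x, y] = m [y, x] \<and> m [x, m [x, y]] = m [x, y])"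

definition has_2_semilattice :: "'a set \<Rightarrow> ('a \<times> 'a) set \<Rightarrow> bool" where
  "has_2_semilattice V E \<longleftrightarrow> (\<exists>m. two_semilattice_pol V E m)"

definition tsi_pol :: "'a set \<Rightarrow> ('a \<times> 'a) set \<Rightarrow> nat \<Rightarrow> ('a list \<Rightarrow> 'a) \<Rightarrow> bool" where
  "tsi_pol V E n p \<longleftrightarrow> polymorphism V E n p \<and> idempotent_op V n p \<and>
     (\<forall>xs ys. length xs = n \<and> length ys = n \<and> set xs \<subseteq> V \<and> set ys \<subseteq> V \<and>
        set xs = set ys \<longrightarrow> p xs = p ys)"

definition has_all_tsi :: "'a set \<Rightarrow> ('a \<times> 'a) set \<Rightarrow> bool" where
  "has_all_tsi V E \<longleftrightarrow> (\<forall>n\<ge>1. \<exists>p. tsi_pol V E n p)"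

end

theory Submission
  imports Defs
begin


definition negs :: "(int + 'a) set \<Rightarrow> int set" where
  "negs S = {u. Inl u \<in> S \<and> u < 0}"
definition poss :: "(int + 'a) set \<Rightarrow> int set" where
  "poss S = {u. Inl u \<in> S \<and> 0 < u}"
definition esel :: "(int + 'a) set \<Rightarrow> int + 'a" where
  "esel S = (if negs S \<noteq> {} then Inl (Min (negs S)) else Inl (Max (poss S)))"
definition extop :: "('a list \<Rightarrow> 'a) \<Rightarrow> (int + 'a) list \<Rightarrow> int + 'a" where
  "extop g xs = (if negs (set xs) = {} \<and> poss (set xs) = {} then Inr (g (map projr xs))
                 else esel (set xs))"
definition restr :: "((int + 'a) list \<Rightarrow> int + 'a) \<Rightarrow> 'a list \<Rightarrow> 'a" where
  "restr f zs = projr (f (map Inr zs))"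

lemma E_LL[simp]: "(Inl u, Inl w) \<in> ext_E i j V E \<longleftrightarrow> u \<in> int_part i j \<and> w \<in> int_part i j \<and> u < w"
  by (auto simp: ext_E_def)
lemma E_RR[simp]: "(Inr a, Inr b) \<in> ext_E i j V E \<longleftrightarrow> (a, b) \<in> E"
  by (auto simp: ext_E_def)
lemma E_LR[simp]: "(Inl u, Inr v) \<in> ext_E i j V E \<longleftrightarrow> u \<in> int_part i j \<and> u < 0 \<and> v \<in> V"
  by (auto simp: ext_E_def)
lemma E_RL[simp]: "(Inr v, Inl u) \<in> ext_E i j V E \<longleftrightarrow> v \<in> V \<and> u \<in> int_part i j \<and> 0 < u"
  by (auto simp: ext_E_def)
lemma V_L[simp]: "Inl u \<in> ext_V i j V \<longleftrightarrow> u \<in> int_part i j"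
  by (auto simp: ext_V_def)
lemma V_R[simp]: "Inr v \<in> ext_V i j V \<longleftrightarrow> v \<in> V"
  by (auto simp: ext_V_def)
lemma ip_nz: "u \<in> int_part i j \<Longrightarrow> u \<noteq> 0"
  by (auto simp: int_part_def)

lemma finite_negs: "finite S \<Longrightarrow> finite (negs S)"
proof -
  assume "finite S"
  have "negs S \<subseteq> Inl -` S" by (auto simp: negs_def)
  moreover have "finite (Inl -` S :: int set)"
    using \<open>finite S\<close> by (rule finite_vimageI) (simp add: inj_on_def)
  ultimately show ?thesis by (rule finite_subset)
qed
lemma finite_poss: "finite S \<Longrightarrow> finite (poss S)"
proof -
  assume "finite S"
  have "poss S \<subseteq> Inl -` S" by (auto simp: poss_def)
  moreover have "finite (Inl -` S :: int set)"
    using \<open>finite S\<close> by (rule finite_vimageI) (simp add: inj_on_def)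
  ultimately show ?thesis by (rule finite_subset)
qed

lemma esel_prop:
  assumes "finite S" "negs S \<union> poss S \<noteq> {}"
  shows "esel S \<in> S \<and> (\<exists>t. esel S = Inl t \<and> t \<noteq> 0)"
proof (cases "negs S \<noteq> {}")
  case True
  then have "Min (negs S) \<in> negs S" using finite_negs[OF assms(1)] by simp
  then show ?thesis using True by (auto simp: esel_def negs_def)
next
  case False
  then have "poss S \<noteq> {}" using assms by auto
  then have "Max (poss S) \<in> poss S" using finite_poss[OF assms(1)] by simp
  then show ?thesis using False by (auto simp: esel_def poss_def)
qed

lemma esel_mono:
  assumes "finite S" "negs S \<union> poss S \<noteq> {}" "esel S \<in> S'" "S' \<subseteq> S"
  shows "esel S' = esel S"
proof (cases "negs S \<noteq> {}")
  case True
  let ?m = "Min (negs S)"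
  have m: "?m \<in> negs S" using True finite_negs[OF assms(1)] by simp
  have e: "esel S = Inl ?m" using True by (simp add: esel_def)
  have "?m \<in> negs S'" using m assms(3) e by (auto simp: negs_def)
  moreover have sub: "negs S' \<subseteq> negs S" using assms(4) by (auto simp: negs_def)
  moreover have fin: "finite (negs S')" using finite_negs[OF assms(1)] sub finite_subset by blast
  ultimately have "Min (negs S') = ?m"
    using finite_negs[OF assms(1)] Min_antimono[of "negs S'" "negs S"] Min_le[of "negs S'" ?m]
    by (metis antisym empty_iff)
  then show ?thesis using \<open>?m \<in> negs S'\<close> e by (auto simp: esel_def)
next
  case False
  let ?m = "Max (poss S)"
  have ne: "poss S \<noteq> {}" using assms False by auto
  have m: "?m \<in> poss S" using ne finite_poss[OF assms(1)] by simp
  have e: "esel S = Inl ?m" using False by (simp add: esel_def)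
  have "?m \<in> poss S'" using m assms(3) e by (auto simp: poss_def)
  moreover have sub: "poss S' \<subseteq> poss S" using assms(4) by (auto simp: poss_def)
  moreover have "negs S' = {}" using False assms(4) by (auto simp: negs_def)
  ultimately have "Max (poss S') = ?m"
    using finite_poss[OF assms(1)] Max_mono[of "poss S'" "poss S"] Max_ge[of "poss S'" ?m]
    by (metis antisym empty_iff finite_subset)
  then show ?thesis using \<open>negs S' = {}\<close> e by (auto simp: esel_def)
qed

lemma extop_Inr: "extop g (map Inr zs) = Inr (g zs)"
  by (auto simp: extop_def negs_def poss_def comp_def)

lemma extop_sel: "Inl u \<in> set xs \<Longrightarrow> u \<noteq> 0 \<Longrightarrow> extop g xs = esel (set xs)"
  unfolding extop_def negs_def poss_def
  by (cases "u < 0") auto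

lemma extop_same: "Inl u \<in> set xs \<Longrightarrow> u \<noteq> 0 \<Longrightarrow> set xs = set ys \<Longrightarrow> extop g xs = extop g' ys"
  using extop_sel[of u xs g] extop_sel[of u ys g'] by simp

lemma allInr: "set xs \<subseteq> ext_V i j V \<Longrightarrow> negs (set xs) = {} \<Longrightarrow> poss (set xs) = {}
   \<Longrightarrow> xs = map Inr (map projr xs) \<and> set (map projr xs) \<subseteq> V"
proof (induction xs)
  case Nil then show ?case by simp
next
  case (Cons x xs)
  have "negs (set xs) = {}" "poss (set xs) = {}" using Cons.prems by (auto simp: negs_def poss_def)
  moreover have "\<exists>v\<in>V. x = Inr v"
  proof (cases x)
    case (Inl u)
    then have "u \<in> int_part i j" using Cons.prems by auto
    then have "u \<noteq> 0" by (rule ip_nz)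
    then show ?thesis using Cons.prems Inl by (auto simp: negs_def poss_def linorder_neq_iff)
  next
    case (Inr v) then show ?thesis using Cons.prems by auto
  qed
  ultimately show ?case using Cons by auto
qed

lemma extop_in:
  assumes "polymorphism V E k g" "length xs = k" "set xs \<subseteq> ext_V i j V"
  shows "extop g xs \<in> ext_V i j V"
proof (cases "negs (set xs) = {} \<and> poss (set xs) = {}")
  case True
  with allInr[OF assms(3)] have "set (map projr xs) \<subseteq> V" by auto
  then have "g (map projr xs) \<in> V" using assms by (auto simp: polymorphism_def)
  then show ?thesis using True by (simp add: extop_def)
next
  case False
  then have "esel (set xs) \<in> set xs" using esel_prop[of "set xs"] by auto
  then show ?thesis using False assms(3) by (auto simp: extop_def)
qed




lemma negs_back:
  assumes "length xs = length ys" "\<forall>l<length xs. (xs!l, ys!l) \<in> ext_E i j V E" "u \<in> negs (set ys)"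
  shows "\<exists>t \<in> negs (set xs). t < u"
proof -
  have "Inl u \<in> set ys" "u < 0" using assms(3) by (auto simp: negs_def)
  then obtain l where l: "l < length ys" "ys ! l = Inl u" by (auto simp: in_set_conv_nth)
  then have ed: "(xs ! l, Inl u) \<in> ext_E i j V E" using assms by auto
  have xl: "xs ! l \<in> set xs" using l assms(1) by simp
  show ?thesis
  proof (cases "xs ! l")
    case (Inl t) then show ?thesis using ed xl \<open>u<0\<close> by (auto simp: negs_def)
  next
    case (Inr v) then show ?thesis using ed \<open>u<0\<close> by auto
  qed
qed

lemma poss_fwd:
  assumes "length xs = length ys" "\<forall>l<length xs. (xs!l, ys!l) \<in> ext_E i j V E" "u \<in> poss (set xs)"
  shows "\<exists>t \<in> poss (set ys). u < t"
proof -
  have "Inl u \<in> set xs" "0 < u" using assms(3) by (auto simp: poss_def)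
  then obtain l where l: "l < length xs" "xs ! l = Inl u" by (auto simp: in_set_conv_nth)
  then have ed: "(Inl u, ys ! l) \<in> ext_E i j V E" using assms by auto
  have yl: "ys ! l \<in> set ys" using l assms(1) by simp
  show ?thesis
  proof (cases "ys ! l")
    case (Inl t) then show ?thesis using ed yl \<open>0<u\<close> by (auto simp: poss_def)
  next
    case (Inr v) then show ?thesis using ed \<open>0<u\<close> by auto
  qed
qed

lemma Min_negs_ip: "negs (set xs) \<noteq> {} \<Longrightarrow> set xs \<subseteq> ext_V i j V \<Longrightarrow>
   Min (negs (set xs)) \<in> int_part i j \<and> Min (negs (set xs)) < 0"
proof -
  assume a: "negs (set xs) \<noteq> {}" "set xs \<subseteq> ext_V i j V"
  have "Min (negs (set xs)) \<in> negs (set xs)" using a finite_negs[of "set xs"] by simp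
  then show ?thesis using a by (auto simp: negs_def)
qed

lemma Max_poss_ip: "poss (set xs) \<noteq> {} \<Longrightarrow> set xs \<subseteq> ext_V i j V \<Longrightarrow>
   Max (poss (set xs)) \<in> int_part i j \<and> 0 < Max (poss (set xs))"
proof -
  assume a: "poss (set xs) \<noteq> {}" "set xs \<subseteq> ext_V i j V"
  have "Max (poss (set xs)) \<in> poss (set xs)" using a finite_poss[of "set xs"] by simp
  then show ?thesis using a by (auto simp: poss_def)
qed

lemma extop_N: "negs (set xs) \<noteq> {} \<Longrightarrow> extop g xs = Inl (Min (negs (set xs)))"
  by (simp add: extop_def esel_def)
lemma extop_P: "negs (set xs) = {} \<Longrightarrow> poss (set xs) \<noteq> {} \<Longrightarrow> extop g xs = Inl (Max (poss (set xs)))"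
  by (simp add: extop_def esel_def)
lemma extop_R: "negs (set xs) = {} \<Longrightarrow> poss (set xs) = {} \<Longrightarrow> extop g xs = Inr (g (map projr xs))"
  by (simp add: extop_def)

lemma ext_pol:
  assumes pg: "polymorphism V E k g"
  shows "polymorphism (ext_V i j V) (ext_E i j V E) k (extop g)"
  unfolding polymorphism_def
proof (intro conjI allI impI)
  fix xs :: "(int + 'a) list" assume "length xs = k \<and> set xs \<subseteq> ext_V i j V"
  then show "extop g xs \<in> ext_V i j V" using extop_in[OF pg] by blast
next
  fix xs ys :: "(int + 'a) list"
  assume A: "length xs = k \<and> length ys = k \<and> set xs \<subseteq> ext_V i j V \<and> set ys \<subseteq> ext_V i j V \<and>
        (\<forall>l<k. (xs ! l, ys ! l) \<in> ext_E i j V E)"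
  then have len: "length xs = length ys" and ed: "\<forall>l<length xs. (xs!l, ys!l) \<in> ext_E i j V E"
    and sx: "set xs \<subseteq> ext_V i j V" and sy: "set ys \<subseteq> ext_V i j V" by auto
  have finS: "finite (negs (set xs))" "finite (poss (set ys))"
    by (auto intro: finite_negs finite_poss)
  show "(extop g xs, extop g ys) \<in> ext_E i j V E"
  proof (cases "negs (set ys) \<noteq> {}")
    case True
    let ?m = "Min (negs (set ys))"
    have "?m \<in> negs (set ys)" using True finite_negs[of "set ys"] by simp
    then obtain t where t: "t \<in> negs (set xs)" "t < ?m" using negs_back[OF len ed] by blast
    then have nx: "negs (set xs) \<noteq> {}" by auto
    have "Min (negs (set xs)) \<le> t" using t finS by simp
    then show ?thesis using t extop_N[OF True] extop_N[OF nx] Min_negs_ip[OF True sy] Min_negs_ip[OF nx sx]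
      by simp
  next
    case ny: False
    show ?thesis
    proof (cases "negs (set xs) \<noteq> {}")
      case nx: True
      have gx: "extop g xs = Inl (Min (negs (set xs)))" using extop_N[OF nx] .
      show ?thesis
      proof (cases "poss (set ys) \<noteq> {}")
        case True
        then show ?thesis using gx extop_P[of ys g] ny Min_negs_ip[OF nx sx] Max_poss_ip[OF True sy] by simp
      next
        case False
        have "extop g ys \<in> ext_V i j V" using extop_in[OF pg] A by blast
        then show ?thesis using gx extop_R[of ys g] ny False Min_negs_ip[OF nx sx] by simp
      qed
    next
      case nx: False
      show ?thesis
      proof (cases "poss (set xs) \<noteq> {}")
        case px: True
        let ?m = "Max (poss (set xs))"
        have "?m \<in> poss (set xs)" using px finite_poss[of "set xs"] by simp
        then obtain t where t: "t \<in> poss (set ys)" "?m < t" using poss_fwd[OF len ed] by blast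
        then have py: "poss (set ys) \<noteq> {}" by auto
        have "t \<le> Max (poss (set ys))" using t finS by simp
        then show ?thesis using t extop_P[of xs g] extop_P[of ys g] nx ny px py
            Max_poss_ip[OF px sx] Max_poss_ip[OF py sy] by simp
      next
        case px: False
        have gx: "extop g xs = Inr (g (map projr xs))" using extop_R[of xs g] nx px by simp
        have gxV: "g (map projr xs) \<in> V" using extop_in[OF pg] A gx by (metis V_R)
        show ?thesis
        proof (cases "poss (set ys) \<noteq> {}")
          case True
          then show ?thesis using gx gxV extop_P[of ys g] ny Max_poss_ip[OF True sy] by simp
        next
          case py: False
          have gy: "extop g ys = Inr (g (map projr ys))" using extop_R[of ys g] ny py by simp
          obtain xs' where X: "xs = map Inr xs'" "set xs' \<subseteq> V"
            using allInr[OF sx] nx px by blast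
          obtain ys' where Y: "ys = map Inr ys'" "set ys' \<subseteq> V"
            using allInr[OF sy] ny py by blast
          have lx: "length xs' = k" "length ys' = k" using A X Y by auto
          have "\<forall>l<k. (xs' ! l, ys' ! l) \<in> E"
          proof (intro allI impI)
            fix l assume l: "l < k"
            have "(xs ! l, ys ! l) \<in> ext_E i j V E" using A l by auto
            then show "(xs' ! l, ys' ! l) \<in> E" using X(1) Y(1) l lx by simp
          qed
          then have "(g xs', g ys') \<in> E"
            using pg X(2) Y(2) lx unfolding polymorphism_def by blast
          moreover have "map projr xs = xs'" "map projr ys = ys'" using X(1) Y(1) by (simp_all add: comp_def)
          ultimately show ?thesis using gx gy by simp
        qed
      qed
    qed
  qed
qed



lemma esel_single: "u \<noteq> 0 \<Longrightarrow> esel {Inl u :: int + 'a} = Inl u"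
proof (cases "u < 0")
  case True
  then have "negs {Inl u :: int + 'a} = {u}" by (auto simp: negs_def)
  then show ?thesis by (simp add: esel_def)
next
  case False
  assume "u \<noteq> 0"
  then have "negs {Inl u :: int + 'a} = {}" "poss {Inl u :: int + 'a} = {u}" using False by (auto simp: negs_def poss_def)
  then show ?thesis by (simp add: esel_def)
qed

lemma pair_nonInr:
  assumes "x \<in> ext_V i j V" "y \<in> ext_V i j V" "\<not> (\<exists>a b. x = Inr a \<and> y = Inr b)"
  shows "\<exists>u. u \<noteq> 0 \<and> (x = Inl u \<or> y = Inl u)"
proof (cases x)
  case (Inl u) then show ?thesis using assms(1) ip_nz by auto
next
  case (Inr a)
  then obtain u where "y = Inl u" using assms(3) by (cases y) auto
  then show ?thesis using assms(2) ip_nz by auto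
qed

lemma set_rep_upd: "1 < n \<Longrightarrow> p < n \<Longrightarrow> set ((replicate n x)[p := y]) = {x, y}"
proof -
  assume a: "1 < n" "p < n"
  have "y \<in> set ((replicate n x)[p := y])" using a by (simp add: set_update_memI)
  moreover define q where "q = (if p = 0 then 1 else (0::nat))"
  have q: "q < n" "q \<noteq> p" using a by (auto simp: q_def)
  then have "(replicate n x)[p := y] ! q = x" by simp
  then have "x \<in> set ((replicate n x)[p := y])" using q
    by (metis length_list_update length_replicate nth_mem)
  moreover have "set ((replicate n x)[p := y]) \<subseteq> insert y (set (replicate n x))"
    by (rule set_update_subset_insert)
  ultimately show ?thesis using a by auto
qed

lemma ext_idem:
  assumes "idempotent_op V k g" "1 \<le> k"
  shows "idempotent_op (ext_V i j V) k (extop g)"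
  unfolding idempotent_op_def
proof
  fix x assume x: "x \<in> ext_V i j V"
  show "extop g (replicate k x) = x"
  proof (cases x)
    case (Inl u)
    then have u: "u \<noteq> 0" using x ip_nz by auto
    have s: "set (replicate k x) = {x}" using assms(2) by simp
    have "extop g (replicate k x) = esel (set (replicate k x))"
      by (rule extop_sel[of u]) (use s Inl u in auto)
    then show ?thesis using s Inl esel_single[OF u] by simp
  next
    case (Inr a)
    then show ?thesis using extop_Inr[of g "replicate k a"] assms x Inr by (simp add: idempotent_op_def)
  qed
qed


lemma ext_wnu:
  assumes "weak_nu V E n w"
  shows "weak_nu (ext_V i j V) (ext_E i j V E) n (extop w)"
proof -
  have n: "1 < n" and pw: "polymorphism V E n w" and iw: "idempotent_op V n w"
    and id: "\<forall>x\<in>V. \<forall>y\<in>V. \<forall>p<n. \<forall>q<n. w ((replicate n x)[p := y]) = w ((replicate n x)[q := y])"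
    using assms unfolding weak_nu_def by (blast)+
  have "\<forall>x\<in>ext_V i j V. \<forall>y\<in>ext_V i j V. \<forall>p<n. \<forall>q<n.
     extop w ((replicate n x)[p := y]) = extop w ((replicate n x)[q := y])"
  proof (intro ballI allI impI)
    fix x y p q assume x: "x \<in> ext_V i j V" and y: "y \<in> ext_V i j V" and p: "p < n" and q: "q < n"
    show "extop w ((replicate n x)[p := y]) = extop w ((replicate n x)[q := y])"
    proof (cases "\<exists>a b. x = Inr a \<and> y = Inr b")
      case True
      then obtain a b where ab: "x = Inr a" "y = Inr b" by blast
      then have "a \<in> V" "b \<in> V" using x y by auto
      have e1: "extop w ((replicate n x)[p:=y]) = Inr (w ((replicate n a)[p:=b]))"
        using extop_Inr[of w "(replicate n a)[p:=b]"] ab by (simp add: map_update)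
      have e2: "extop w ((replicate n x)[q:=y]) = Inr (w ((replicate n a)[q:=b]))"
        using extop_Inr[of w "(replicate n a)[q:=b]"] ab by (simp add: map_update)
      show ?thesis unfolding e1 e2 using id \<open>a \<in> V\<close> \<open>b \<in> V\<close> p q by blast
    next
      case False
      then obtain u where u: "u \<noteq> 0" "x = Inl u \<or> y = Inl u" using pair_nonInr[OF x y] by blast
      show ?thesis
      proof (rule extop_same[of u])
        show "set ((replicate n x)[p := y]) = set ((replicate n x)[q := y])"
          unfolding set_rep_upd[OF n p] set_rep_upd[OF n q] ..
        show "Inl u \<in> set ((replicate n x)[p := y])" unfolding set_rep_upd[OF n p] using u by blast
      qed (use u in blast)
    qed
  qed
  moreover have "idempotent_op (ext_V i j V) n (extop w)" using ext_idem[OF iw] n by simp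
  ultimately show ?thesis using n ext_pol[OF pw] unfolding weak_nu_def by blast
qed



lemma ext_SD:
  assumes "SD_meet V E"
  shows "SD_meet (ext_V i j V) (ext_E i j V E)"
proof -
  obtain w1 w2 where w: "weak_nu V E 3 w1" "weak_nu V E 4 w2"
    and id: "\<forall>x\<in>V. \<forall>y\<in>V. w1 [y, x, x] = w2 [y, x, x, x]"
    using assms unfolding SD_meet_def by (blast)+
  have "\<forall>x\<in>ext_V i j V. \<forall>y\<in>ext_V i j V. extop w1 [y, x, x] = extop w2 [y, x, x, x]"
  proof (intro ballI)
    fix x y assume x: "x \<in> ext_V i j V" and y: "y \<in> ext_V i j V"
    show "extop w1 [y, x, x] = extop w2 [y, x, x, x]"
    proof (cases "\<exists>a b. x = Inr a \<and> y = Inr b")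
      case True
      then obtain a b where ab: "x = Inr a" "y = Inr b" by blast
      then have "a \<in> V" "b \<in> V" using x y by auto
      then show ?thesis using ab id extop_Inr[of w1 "[b,a,a]"] extop_Inr[of w2 "[b,a,a,a]"] by simp
    next
      case False
      then obtain u where u: "u \<noteq> 0" "x = Inl u \<or> y = Inl u" using pair_nonInr[OF x y] by blast
      show ?thesis by (rule extop_same[of u]) (use u in auto)
    qed
  qed
  then show ?thesis using ext_wnu[OF w(1)] ext_wnu[OF w(2)] unfolding SD_meet_def by blast
qed



lemma ext_2sl:
  assumes "two_semilattice_pol V E m"
  shows "two_semilattice_pol (ext_V i j V) (ext_E i j V E) (extop m)"
proof -
  have pm: "polymorphism V E 2 m" and im: "idempotent_op V 2 m"
    and id: "\<forall>x\<in>V. \<forall>y\<in>V. m [x, y] = m [y, x] \<and> m [x, m [x, y]] = m [x, y]"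
    using assms unfolding two_semilattice_pol_def by (blast)+
  have "\<forall>x\<in>ext_V i j V. \<forall>y\<in>ext_V i j V. extop m [x, y] = extop m [y, x] \<and>
       extop m [x, extop m [x, y]] = extop m [x, y]"
  proof (intro ballI)
    fix x y assume x: "x \<in> ext_V i j V" and y: "y \<in> ext_V i j V"
    show "extop m [x, y] = extop m [y, x] \<and> extop m [x, extop m [x, y]] = extop m [x, y]"
    proof (cases "\<exists>a b. x = Inr a \<and> y = Inr b")
      case True
      then obtain a b where ab: "x = Inr a" "y = Inr b" by blast
      then have "a \<in> V" "b \<in> V" using x y by auto
      then show ?thesis using ab id extop_Inr[of m "[a,b]"] extop_Inr[of m "[b,a]"]
          extop_Inr[of m "[a, m[a,b]]"] by simp
    next
      case False
      then obtain u where u: "u \<noteq> 0" "x = Inl u \<or> y = Inl u" using pair_nonInr[OF x y] by blast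
      have c1: "extop m [x, y] = extop m [y, x]" by (rule extop_same[of u]) (use u in auto)
      have z: "extop m [x, y] = esel {x, y}" using extop_sel[of u "[x,y]" m] u by auto
      have ne: "negs {x, y} \<union> poss {x, y} \<noteq> {}" using u
        by (auto simp: negs_def poss_def linorder_neq_iff)
      obtain t where t: "esel {x, y} \<in> {x, y}" "esel {x,y} = Inl t" "t \<noteq> 0"
        using esel_prop[OF _ ne] by auto
      have "extop m [x, extop m [x, y]] = esel {x, esel {x, y}}"
        using extop_sel[of t "[x, esel {x,y}]" m] t z by auto
      also have "\<dots> = esel {x, y}"
        by (rule esel_mono) (use ne t in auto)
      finally show ?thesis using c1 z by simp
    qed
  qed
  moreover have "idempotent_op (ext_V i j V) 2 (extop m)" using ext_idem[OF im] by simp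
  ultimately show ?thesis using ext_pol[OF pm] unfolding two_semilattice_pol_def by blast
qed



lemma ext_tsi:
  assumes "tsi_pol V E n p" "1 \<le> n"
  shows "tsi_pol (ext_V i j V) (ext_E i j V E) n (extop p)"
proof -
  have pp: "polymorphism V E n p" and ip: "idempotent_op V n p"
    and id: "\<forall>xs ys. length xs = n \<and> length ys = n \<and> set xs \<subseteq> V \<and> set ys \<subseteq> V \<and>
        set xs = set ys \<longrightarrow> p xs = p ys"
    using assms unfolding tsi_pol_def by (blast)+
  have "\<forall>xs ys. length xs = n \<and> length ys = n \<and> set xs \<subseteq> ext_V i j V \<and> set ys \<subseteq> ext_V i j V \<and>
        set xs = set ys \<longrightarrow> extop p xs = extop p ys"
  proof (intro allI impI)
    fix xs ys :: "(int + 'a) list"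
    assume A: "length xs = n \<and> length ys = n \<and> set xs \<subseteq> ext_V i j V \<and> set ys \<subseteq> ext_V i j V \<and>
        set xs = set ys"
    show "extop p xs = extop p ys"
    proof (cases "negs (set xs) = {} \<and> poss (set xs) = {}")
      case True
      obtain xs' where X: "xs = map Inr xs'" "set xs' \<subseteq> V" using allInr[of xs i j V] A True by blast
      have T2: "negs (set ys) = {} \<and> poss (set ys) = {}" using A True by simp
      obtain ys' where Y: "ys = map Inr ys'" "set ys' \<subseteq> V" using allInr[of ys i j V] A T2 by blast
      have "Inr ` set xs' = (Inr ` set ys' :: (int + 'a) set)" using A X(1) Y(1) by simp
      then have "set xs' = set ys'" by (simp add: inj_image_eq_iff)
      moreover have "length xs' = n" "length ys' = n" using A X(1) Y(1) by auto
      ultimately have "p xs' = p ys'" using id X(2) Y(2) by blast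
      then show ?thesis using X Y by (simp add: extop_Inr)
    next
      case False
      then obtain u where "Inl u \<in> set xs" "u \<noteq> 0" by (auto simp: negs_def poss_def)
      then show ?thesis using A extop_same[of u xs ys p p] by blast
    qed
  qed
  then show ?thesis using ext_pol[OF pp] ext_idem[OF ip assms(2)] unfolding tsi_pol_def by blast
qed





lemma restr_in:
  assumes pf: "polymorphism (ext_V i j V) (ext_E i j V E) k f" and idf: "idempotent_op (ext_V i j V) k f"
    and zs: "length zs = k" "set zs \<subseteq> V"
  shows "f (map Inr zs) \<in> Inr ` V"
proof -
  have "set (map Inr zs :: (int + 'a) list) \<subseteq> ext_V i j V" "length (map Inr zs :: (int + 'a) list) = k"
    using zs by auto
  then have mem: "f (map Inr zs) \<in> ext_V i j V" using pf unfolding polymorphism_def by blast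
  show ?thesis
  proof (cases "f (map Inr zs)")
    case (Inl u)
    then have u: "u \<in> int_part i j" "u \<noteq> 0" using mem ip_nz by auto
    have fL: "f (replicate k (Inl u)) = Inl u" using idf u unfolding idempotent_op_def by simp
    have lenL: "length (replicate k (Inl u) :: (int + 'a) list) = k" by simp
    have sL: "set (replicate k (Inl u) :: (int + 'a) list) \<subseteq> ext_V i j V" using u by auto
    have sZ: "set (map Inr zs :: (int + 'a) list) \<subseteq> ext_V i j V" using zs by auto
    show ?thesis
    proof (cases "u < 0")
      case True
      have "\<forall>l<k. (replicate k (Inl u) ! l, map Inr zs ! l) \<in> ext_E i j V E"
        using True u zs by auto
      then have "(f (replicate k (Inl u)), f (map Inr zs)) \<in> ext_E i j V E"
        using pf lenL sL sZ zs unfolding polymorphism_def by (metis length_map)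
      then show ?thesis using fL Inl by simp
    next
      case False
      then have "0 < u" using u by simp
      have "\<forall>l<k. (map Inr zs ! l, replicate k (Inl u) ! l) \<in> ext_E i j V E"
        using \<open>0 < u\<close> u zs by auto
      then have "(f (map Inr zs), f (replicate k (Inl u))) \<in> ext_E i j V E"
        using pf lenL sL sZ zs unfolding polymorphism_def by (metis length_map)
      then show ?thesis using fL Inl by simp
    qed
  next
    case (Inr v) then show ?thesis using mem by auto
  qed
qed

lemma restr_eq:
  assumes "polymorphism (ext_V i j V) (ext_E i j V E) k f" "idempotent_op (ext_V i j V) k f"
    "length zs = k" "set zs \<subseteq> V"
  shows "Inr (restr f zs) = f (map Inr zs) \<and> restr f zs \<in> V"
  using restr_in[OF assms] by (auto simp: restr_def)

lemma restr_pol: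
  assumes pf: "polymorphism (ext_V i j V) (ext_E i j V E) k f" and idf: "idempotent_op (ext_V i j V) k f"
  shows "polymorphism V E k (restr f)"
  unfolding polymorphism_def
proof (intro conjI allI impI)
  fix xs :: "'a list" assume "length xs = k \<and> set xs \<subseteq> V"
  then show "restr f xs \<in> V" using restr_eq[OF pf idf] by blast
next
  fix xs ys :: "'a list"
  assume A: "length xs = k \<and> length ys = k \<and> set xs \<subseteq> V \<and> set ys \<subseteq> V \<and> (\<forall>l<k. (xs ! l, ys ! l) \<in> E)"
  have "\<forall>l<k. (map Inr xs ! l, map Inr ys ! l) \<in> ext_E i j V E" using A by auto
  moreover have "length (map Inr xs :: (int + 'a) list) = k" "length (map Inr ys :: (int + 'a) list) = k"
    "set (map Inr xs :: (int + 'a) list) \<subseteq> ext_V i j V" "set (map Inr ys :: (int + 'a) list) \<subseteq> ext_V i j V"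
    using A by auto
  ultimately have "(f (map Inr xs), f (map Inr ys)) \<in> ext_E i j V E"
    using pf unfolding polymorphism_def by blast
  moreover have "Inr (restr f xs) = f (map Inr xs)" "Inr (restr f ys) = f (map Inr ys)"
    using restr_eq[OF pf idf] A by blast+
  ultimately show "(restr f xs, restr f ys) \<in> E" by (metis E_RR)
qed

lemma restr_idem:
  assumes "idempotent_op (ext_V i j V) k f"
  shows "idempotent_op V k (restr f)"
  using assms unfolding idempotent_op_def restr_def
  by (metis V_R map_replicate sum.sel(2))

lemma restr_wnu:
  assumes "weak_nu (ext_V i j V) (ext_E i j V E) n f"
  shows "weak_nu V E n (restr f)"
proof -
  have n: "1 < n" and pf: "polymorphism (ext_V i j V) (ext_E i j V E) n f"
    and idf: "idempotent_op (ext_V i j V) n f"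
    and id: "\<forall>x\<in>ext_V i j V. \<forall>y\<in>ext_V i j V. \<forall>p<n. \<forall>q<n.
        f ((replicate n x)[p := y]) = f ((replicate n x)[q := y])"
    using assms unfolding weak_nu_def by (blast)+
  have "\<forall>x\<in>V. \<forall>y\<in>V. \<forall>p<n. \<forall>q<n.
        restr f ((replicate n x)[p := y]) = restr f ((replicate n x)[q := y])"
  proof (intro ballI allI impI)
    fix x y p q assume x: "x \<in> V" and y: "y \<in> V" and p: "p < n" and q: "q < n"
    have "\<And>r. restr f ((replicate n x)[r := y]) = projr (f ((replicate n (Inr x))[r := Inr y]))"
      by (simp add: restr_def map_update)
    moreover have "f ((replicate n (Inr x))[p := Inr y]) = f ((replicate n (Inr x))[q := Inr y])"
      using id x y p q by (meson V_R)
    ultimately show "restr f ((replicate n x)[p := y]) = restr f ((replicate n x)[q := y])" by simp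
  qed
  then show ?thesis using n restr_pol[OF pf idf] restr_idem[OF idf] unfolding weak_nu_def by blast
qed

lemma restr_SD:
  assumes "SD_meet (ext_V i j V) (ext_E i j V E)"
  shows "SD_meet V E"
proof -
  obtain w1 w2 where w: "weak_nu (ext_V i j V) (ext_E i j V E) 3 w1" "weak_nu (ext_V i j V) (ext_E i j V E) 4 w2"
    and id: "\<forall>x\<in>ext_V i j V. \<forall>y\<in>ext_V i j V. w1 [y, x, x] = w2 [y, x, x, x]"
    using assms unfolding SD_meet_def by blast
  have "\<forall>x\<in>V. \<forall>y\<in>V. restr w1 [y, x, x] = restr w2 [y, x, x, x]"
  proof (intro ballI)
    fix x y assume "x \<in> V" "y \<in> V"
    then have "w1 [Inr y, Inr x, Inr x] = w2 [Inr y, Inr x, Inr x, Inr x]" using id by (meson V_R)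
    then show "restr w1 [y, x, x] = restr w2 [y, x, x, x]" by (simp add: restr_def)
  qed
  then show ?thesis using restr_wnu[OF w(1)] restr_wnu[OF w(2)] unfolding SD_meet_def by blast
qed

lemma restr_2sl:
  assumes "two_semilattice_pol (ext_V i j V) (ext_E i j V E) m"
  shows "two_semilattice_pol V E (restr m)"
proof -
  have pm: "polymorphism (ext_V i j V) (ext_E i j V E) 2 m" and im: "idempotent_op (ext_V i j V) 2 m"
    and id: "\<forall>x\<in>ext_V i j V. \<forall>y\<in>ext_V i j V. m [x, y] = m [y, x] \<and> m [x, m [x, y]] = m [x, y]"
    using assms unfolding two_semilattice_pol_def by (blast)+
  have "\<forall>x\<in>V. \<forall>y\<in>V. restr m [x, y] = restr m [y, x] \<and> restr m [x, restr m [x, y]] = restr m [x, y]"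
  proof (intro ballI)
    fix x y assume x: "x \<in> V" and y: "y \<in> V"
    have e: "Inr (restr m [x, y]) = m [Inr x, Inr y]" "restr m [x, y] \<in> V"
      using restr_eq[OF pm im, of "[x,y]"] x y by auto
    have c: "m [Inr x, Inr y] = m [Inr y, Inr x]" using id x y by (meson V_R)
    have "m [Inr x, m [Inr x, Inr y]] = m [Inr x, Inr y]" using id x y by (meson V_R)
    then have "m [Inr x, Inr (restr m [x, y])] = m [Inr x, Inr y]" using e by simp
    then have "restr m [x, restr m [x, y]] = restr m [x, y]" by (simp add: restr_def)
    moreover have "restr m [x, y] = restr m [y, x]" using c by (simp add: restr_def)
    ultimately show "restr m [x, y] = restr m [y, x] \<and> restr m [x, restr m [x, y]] = restr m [x, y]"
      by blast
  qed
  then show ?thesis using restr_pol[OF pm im] restr_idem[OF im] unfolding two_semilattice_pol_def by blast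
qed

lemma restr_tsi:
  assumes "tsi_pol (ext_V i j V) (ext_E i j V E) n p"
  shows "tsi_pol V E n (restr p)"
proof -
  have pp: "polymorphism (ext_V i j V) (ext_E i j V E) n p" and ip: "idempotent_op (ext_V i j V) n p"
    and id: "\<forall>xs ys. length xs = n \<and> length ys = n \<and> set xs \<subseteq> ext_V i j V \<and> set ys \<subseteq> ext_V i j V \<and>
        set xs = set ys \<longrightarrow> p xs = p ys"
    using assms unfolding tsi_pol_def by (blast)+
  have "\<forall>xs ys. length xs = n \<and> length ys = n \<and> set xs \<subseteq> V \<and> set ys \<subseteq> V \<and>
        set xs = set ys \<longrightarrow> restr p xs = restr p ys"
  proof (intro allI impI)
    fix xs ys :: "'a list"
    assume A: "length xs = n \<and> length ys = n \<and> set xs \<subseteq> V \<and> set ys \<subseteq> V \<and> set xs = set ys"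
    have "length (map Inr xs :: (int + 'a) list) = n" "length (map Inr ys :: (int + 'a) list) = n"
      "set (map Inr xs :: (int + 'a) list) \<subseteq> ext_V i j V" "set (map Inr ys :: (int + 'a) list) \<subseteq> ext_V i j V"
      "set (map Inr xs :: (int + 'a) list) = set (map Inr ys)"
      using A by auto
    then have "p (map Inr xs) = p (map Inr ys)" using id by blast
    then show "restr p xs = restr p ys" by (simp add: restr_def)
  qed
  then show ?thesis using restr_pol[OF pp ip] restr_idem[OF ip] unfolding tsi_pol_def by blast
qed

theorem corollary4p8:
  fixes V :: "'a set" and E :: "('a \<times> 'a) set" and i j :: int
  assumes "digraph V E" and "i \<le> 0" and "0 \<le> j"
  shows "(taylor V E \<longleftrightarrow> taylor (ext_V i j V) (ext_E i j V E))
       \<and> (SD_meet V E \<longleftrightarrow> SD_meet (ext_V i j V) (ext_E i j V E))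
       \<and> (has_2_semilattice V E \<longleftrightarrow> has_2_semilattice (ext_V i j V) (ext_E i j V E))
       \<and> (has_all_tsi V E \<longleftrightarrow> has_all_tsi (ext_V i j V) (ext_E i j V E))"
proof (intro conjI iffI)
  show "taylor V E \<Longrightarrow> taylor (ext_V i j V) (ext_E i j V E)"
    unfolding taylor_def using ext_wnu by blast
  show "taylor (ext_V i j V) (ext_E i j V E) \<Longrightarrow> taylor V E"
    unfolding taylor_def using restr_wnu by blast
  show "SD_meet V E \<Longrightarrow> SD_meet (ext_V i j V) (ext_E i j V E)" by (rule ext_SD)
  show "SD_meet (ext_V i j V) (ext_E i j V E) \<Longrightarrow> SD_meet V E" by (rule restr_SD)
  show "has_2_semilattice V E \<Longrightarrow> has_2_semilattice (ext_V i j V) (ext_E i j V E)"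
    unfolding has_2_semilattice_def using ext_2sl by blast
  show "has_2_semilattice (ext_V i j V) (ext_E i j V E) \<Longrightarrow> has_2_semilattice V E"
    unfolding has_2_semilattice_def using restr_2sl by blast
  show "has_all_tsi V E \<Longrightarrow> has_all_tsi (ext_V i j V) (ext_E i j V E)"
    unfolding has_all_tsi_def using ext_tsi by blast
  show "has_all_tsi (ext_V i j V) (ext_E i j V E) \<Longrightarrow> has_all_tsi V E"
    unfolding has_all_tsi_def using restr_tsi by blast
qed


end
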